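(* Let $n\ge2$, $c\ge1$, $d\ge r\ge1$ and $\epsilon>0$, and let $B=2\epsilon^{-2}\frac{d}{cr}\log n$. There is a random set $F$ (a probability distribution over sets) of $d/B$ functions $f:\{0,1\}^d\to\{0,1\}^B$ such that for every $x,y\in\{0,1\}^d$: (1) with probability 1 there is at least one $f\in F$ with $\operatorname{dist}(f(x),f(y))\le\operatorname{dist}(x,y)\,B/d$; (2) if $\operatorname{dist}(x,y)\ge cr$, then for every $f\in F$, with probability at least $1-1/n$, $\operatorname{dist}(f(x),f(y))\ge(1-\epsilon)cr\,B/d$.
   Context: $\operatorname{dist}$ denotes Hamming distance (number of differing coordinates) on binary vectors of the appropriate length. *)

theory Defs
  imports "HOL-Probability.Probability"
begin

text \<open>Binary vectors in {0,1}^d are bool lists of length d.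
  Hamming distance: number of differing coordinates.\<close>
definition hdist :: "bool list \<Rightarrow> bool list \<Rightarrow> nat" where
  "hdist xs ys = card {i. i < length xs \<and> i < length ys \<and> xs ! i \<noteq> ys ! i}"

end

theory Submission
  imports Defs
begin


lemma chern_ineq:
  fixes e :: real
  assumes "0 \<le> e" "e < 1"
  shows "e^2/2 \<le> e + (1-e)*ln(1-e)"
proof -
  let ?f = "\<lambda>x::real. x + (1-x)*ln(1-x) - x^2/2"
  have "?f 0 \<le> ?f e"
  proof (rule DERIV_nonneg_imp_nondecreasing[OF assms(1)])
    fix x assume x: "0 \<le> x" "x \<le> e"
    hence x1: "1 - x > 0" using assms by simp
    have "DERIV ?f x :> (-ln(1-x) - x)"
      using x1 by (auto intro!: derivative_eq_intros)
    moreover have "-ln(1-x) - x \<ge> 0"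
      using ln_le_minus_one[of "1-x"] x1 by simp
    ultimately show "\<exists>y. DERIV ?f x :> y \<and> y \<ge> 0" by blast
  qed
  thus ?thesis by simp
qed

lemma conv_step:
  fixes a s :: real
  assumes "0 \<le> a" "a \<le> 1" "0 \<le> s" "s \<le> 1"
  shows "(1-a) * exp (a * s) \<le> (1-a) + a * s"
proof -
  have "exp ((1-s) *\<^sub>R 0 + s *\<^sub>R a) \<le> (1-s) * exp 0 + s * exp a"
    by (rule convex_onD[OF exp_convex]) (use assms in auto)
  hence e1: "exp (a * s) \<le> (1-s) + s * exp a" by (simp add: mult.commute)
  have "(1-a) * exp a \<le> exp (-a) * exp a"
    using exp_ge_add_one_self[of "-a"] by (intro mult_right_mono) auto
  hence e2: "(1-a) * exp a \<le> 1" by (simp add: exp_minus)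
  have "(1-a) * exp (a * s) \<le> (1-a) * ((1-s) + s * exp a)"
    using e1 assms by (intro mult_left_mono) auto
  also have "\<dots> = (1-a)*(1-s) + s * ((1-a) * exp a)" by (simp add: algebra_simps)
  also have "\<dots> \<le> (1-a)*(1-s) + s * 1"
    using e2 assms by (intro add_left_mono mult_left_mono) auto
  also have "\<dots> = (1-a) + a * s" by (simp add: algebra_simps)
  finally show ?thesis .
qed

lemma key_real:
  fixes N M k :: nat and q :: real
  assumes N1: "N \<ge> 1" and MN: "M \<le> N" and kN: "k + 1 \<le> N" and q0: "0 \<le> q" and q1: "q \<le> 1"
  shows "real M * q * exp (-(1-q) * real k * (real M - 1) / (real N - 1))
       + real (N - M) * exp (-(1-q) * real k * real M / (real N - 1))
       \<le> real N * exp (-(1-q) * real (Suc k) * real M / real N)"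
proof -
  define a where "a = 1 - q"
  define w where "w = real k / (real N - 1)"
  have a0: "0 \<le> a" "a \<le> 1" using q0 q1 by (auto simp: a_def)
  have s0: "0 \<le> w" "w \<le> 1" using N1 kN by (auto simp: w_def divide_simps)
  have qa: "q = 1 - a" by (simp add: a_def)
  have E1: "-(1-q) * real k * (real M - 1) / (real N - 1) = -a * w * real M + a * w"
  proof -
    have "-(1-q) * real k * (real M - 1) / (real N - 1) = -a * (real k / (real N - 1)) * (real M - 1)"
      by (simp add: a_def)
    thus ?thesis unfolding w_def[symmetric] by (simp add: algebra_simps)
  qed
  have E0: "-(1-q) * real k * real M / (real N - 1) = -a * w * real M"
  proof -
    have "-(1-q) * real k * real M / (real N - 1) = -a * (real k / (real N - 1)) * real M"
      by (simp add: a_def)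
    thus ?thesis unfolding w_def[symmetric] by (simp add: algebra_simps)
  qed
  have ks: "real (Suc k) / real N = w + (1 - w) / real N"
  proof (cases "N = 1")
    case True then have "k = 0" using kN by simp
    then show ?thesis using True by (simp add: w_def)
  next
    case False then have "real N - 1 > 0" using N1 by simp
    then have wk: "w * (real N - 1) = real k" by (simp add: w_def)
    have "w + (1 - w)/real N = (w * (real N - 1) + 1)/real N" using N1 by (simp add: field_simps)
    then show ?thesis using wk by simp
  qed
  have ER: "-(1-q) * real (Suc k) * real M / real N = -a * w * real M + (-(real M / real N) * a * (1-w))"
  proof -
    have "-(1-q) * real (Suc k) * real M / real N = -a * real M * (real (Suc k) / real N)"
      by (simp add: a_def)
    also have "\<dots> = -a * w * real M + (-(real M / real N) * a * (1-w))"
      unfolding ks using N1 by (simp add: field_simps)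
    finally show ?thesis .
  qed
  have c: "q * exp (a * w) \<le> q + a * w" using conv_step[OF a0 s0] qa by simp
  have ee: "exp (-a * w * real M + a * w) = exp (-a * w * real M) * exp (a * w)"
    by (simp add: exp_add[symmetric])
  have RN: "real (N - M) = real N - real M" using MN by simp
  have "real M * q * exp (-a * w * real M + a * w) + (real N - real M) * exp (-a * w * real M)
      = exp (-a * w * real M) * (real M * (q * exp (a * w)) + real N - real M)"
    unfolding ee by (simp add: algebra_simps)
  also have "\<dots> \<le> exp (-a * w * real M) * (real M * (q + a * w) + real N - real M)"
    using c by (intro mult_left_mono add_right_mono) (auto intro: mult_left_mono)
  also have "\<dots> = exp (-a * w * real M) * (real N * (1 + (-(real M / real N) * a * (1-w))))"
  proof -
    have "real M * (q + a * w) + real N - real M = real N * (1 + (-(real M / real N) * a * (1-w)))"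
      unfolding qa using N1 by (simp add: field_simps)
    thus ?thesis by simp
  qed
  also have "\<dots> \<le> exp (-a * w * real M) * (real N * exp (-(real M / real N) * a * (1-w)))"
    by (intro mult_left_mono exp_ge_add_one_self) auto
  also have "\<dots> = real N * exp (-a * w * real M + (-(real M / real N) * a * (1-w)))"
    by (simp only: exp_add mult_ac)
  finally show ?thesis unfolding E1 E0 ER RN .
qed


definition cnt :: "nat set \<Rightarrow> nat \<Rightarrow> nat list \<Rightarrow> nat" where
  "cnt D k ps = length (filter (\<lambda>j. j \<in> D) (take k ps))"

lemma sum_perms_Cons:
  assumes "finite A" "A \<noteq> {}"
  shows "(\<Sum>ps\<in>permutations_of_set A. g ps) = (\<Sum>x\<in>A. \<Sum>xs\<in>permutations_of_set (A - {x}). g (x # xs))"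
proof -
  have "(\<Sum>ps\<in>permutations_of_set A. g ps) = (\<Sum>ps\<in>(\<Union>x\<in>A. (#) x ` permutations_of_set (A - {x})). g ps)"
    using assms by (simp add: permutations_of_set_nonempty)
  also have "\<dots> = (\<Sum>x\<in>A. \<Sum>ps\<in>(#) x ` permutations_of_set (A - {x}). g ps)"
    using assms by (intro sum.UNION_disjoint) auto
  also have "\<dots> = (\<Sum>x\<in>A. \<Sum>xs\<in>permutations_of_set (A - {x}). g (x # xs))"
    by (rule sum.cong[OF refl]) (simp add: sum.reindex)
  finally show ?thesis .
qed

lemma mgf:
  fixes q :: real
  assumes "finite A" "k \<le> card A" "0 \<le> q" "q \<le> 1"
  shows "(\<Sum>ps\<in>permutations_of_set A. q ^ cnt D k ps)
     \<le> fact (card A) * exp (-(1-q) * real k * real (card (A \<inter> D)) / real (card A))"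
  using assms
proof (induction k arbitrary: A)
  case 0
  then show ?case by (simp add: cnt_def)
next
  case (Suc k A)
  define N where "N = card A"
  define M where "M = card (A \<inter> D)"
  have Ane: "A \<noteq> {}" using Suc.prems by auto
  have N1: "N \<ge> 1" using Suc.prems by (simp add: N_def)
  have MN: "M \<le> N" unfolding M_def N_def using Suc.prems by (intro card_mono) auto
  have cardx: "card (A - {x}) = N - 1" if "x \<in> A" for x
    using that Suc.prems by (simp add: N_def)
  have Mx: "card ((A - {x}) \<inter> D) = (if x \<in> D then M - 1 else M)" if "x \<in> A" for x
  proof -
    have "(A - {x}) \<inter> D = (A \<inter> D) - {x}" by auto
    thus ?thesis using that Suc.prems by (simp add: M_def)
  qed
  define h where "h x = (if x \<in> D then q else 1) * (fact (N-1) *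
      exp (-(1-q) * real k * real (card ((A - {x}) \<inter> D)) / real (N - 1)))" for x
  have "(\<Sum>ps\<in>permutations_of_set A. q ^ cnt D (Suc k) ps)
      = (\<Sum>x\<in>A. \<Sum>xs\<in>permutations_of_set (A - {x}). q ^ cnt D (Suc k) (x # xs))"
    by (rule sum_perms_Cons[OF Suc.prems(1) Ane])
  also have "\<dots> = (\<Sum>x\<in>A. (if x \<in> D then q else 1) * (\<Sum>xs\<in>permutations_of_set (A - {x}). q ^ cnt D k xs))"
    by (intro sum.cong refl) (auto simp: cnt_def sum_distrib_left)
  also have "\<dots> \<le> (\<Sum>x\<in>A. h x)"
  proof (intro sum_mono)
    fix x assume x: "x \<in> A"
    have "(\<Sum>xs\<in>permutations_of_set (A - {x}). q ^ cnt D k xs)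
        \<le> fact (card (A - {x})) * exp (-(1-q) * real k * real (card ((A - {x}) \<inter> D)) / real (card (A - {x})))"
      using Suc.prems x cardx[OF x] by (intro Suc.IH) auto
    thus "(if x \<in> D then q else 1) * (\<Sum>xs\<in>permutations_of_set (A - {x}). q ^ cnt D k xs) \<le> h x"
      unfolding h_def cardx[OF x] using Suc.prems by (intro mult_left_mono) auto
  qed
  also have "(\<Sum>x\<in>A. h x) = (\<Sum>x\<in>A \<inter> D. h x) + (\<Sum>x\<in>A - D. h x)"
    using Suc.prems(1) by (rule sum.Int_Diff)
  also have "(\<Sum>x\<in>A \<inter> D. h x) = (\<Sum>x\<in>A \<inter> D. q * (fact (N-1) *
      exp (-(1-q) * real k * (real M - 1) / (real N - 1))))"
  proof (intro sum.cong refl)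
    fix x assume x: "x \<in> A \<inter> D"
    hence "A \<inter> D \<noteq> {}" by auto
    hence "M \<ge> 1" unfolding M_def using Suc.prems(1) by (simp add: Suc_leI card_gt_0_iff)
    thus "h x = q * (fact (N-1) * exp (-(1-q) * real k * (real M - 1) / (real N - 1)))"
      using x N1 by (simp add: h_def Mx of_nat_diff)
  qed
  also have "(\<Sum>x\<in>A - D. h x) = (\<Sum>x\<in>A - D. fact (N-1) *
      exp (-(1-q) * real k * real M / (real N - 1)))"
    by (intro sum.cong refl) (use N1 in \<open>auto simp: h_def Mx of_nat_diff\<close>)
  also have "card (A - D) = N - M"
  proof -
    have "A - D = A - (A \<inter> D)" by auto
    thus ?thesis unfolding N_def M_def using Suc.prems(1) by (simp add: card_Diff_subset)
  qed
  hence "(\<Sum>x\<in>A \<inter> D. q * (fact (N-1) * exp (-(1-q) * real k * (real M - 1) / (real N - 1))))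
      + (\<Sum>x\<in>A - D. fact (N-1) * exp (-(1-q) * real k * real M / (real N - 1)))
      = fact (N-1) * (real M * q * exp (-(1-q) * real k * (real M - 1) / (real N - 1))
       + real (N - M) * exp (-(1-q) * real k * real M / (real N - 1)))"
    by (simp add: M_def algebra_simps)
  also have "\<dots> \<le> fact (N-1) * (real N * exp (-(1-q) * real (Suc k) * real M / real N))"
    using key_real[OF N1 MN _ Suc.prems(3,4), of k] Suc.prems(2) N_def
    by (intro mult_left_mono) auto
  also have "\<dots> = fact N * exp (-(1-q) * real (Suc k) * real M / real N)"
  proof -
    have "fact N = (real N * fact (N - 1) :: real)" using N1 by (cases N) auto
    thus ?thesis by simp
  qed
  finally show ?case by (simp add: N_def M_def)
qed



lemma hdist_map:
  "hdist (map (nth x) L) (map (nth y) L) = length (filter (\<lambda>j. x!j \<noteq> y!j) L)"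
  unfolding hdist_def length_filter_conv_card by (intro arg_cong[where f=card]) auto

lemma block_sum:
  "(\<Sum>i<m. length (filter P (take B (drop (i*B) ps)))) = length (filter P (take (m*B) ps))"
proof (induction m)
  case 0 then show ?case by simp
next
  case (Suc m)
  have "Suc m * B = m*B + B" by simp
  hence "take (Suc m * B) ps = take (m*B) ps @ take B (drop (m*B) ps)"
    by (simp only: take_add)
  then show ?case using Suc by simp
qed

lemma hdist_perm:
  assumes "ps \<in> permutations_of_set {0..<d}" "length x = d" "length y = d"
  shows "length (filter (\<lambda>j. x!j \<noteq> y!j) ps) = hdist x y"
proof -
  have dist: "distinct ps" "set ps = {0..<d}" using permutations_of_setD[OF assms(1)] by auto
  have "length (filter (\<lambda>j. x!j \<noteq> y!j) ps) = card (set (filter (\<lambda>j. x!j \<noteq> y!j) ps))"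
    using dist by (metis distinct_card distinct_filter)
  also have "set (filter (\<lambda>j. x!j \<noteq> y!j) ps) = {i. i < length x \<and> i < length y \<and> x!i \<noteq> y!i}"
    using dist assms by auto
  finally show ?thesis by (simp only: hdist_def)
qed

lemma averaging:
  fixes a :: "nat \<Rightarrow> nat"
  assumes "m > 0"
  shows "\<exists>i<m. real (a i) * real m \<le> real (\<Sum>i<m. a i)"
proof (rule ccontr)
  define S where "S = real (\<Sum>i<m. a i)"
  assume "\<not> ?thesis"
  hence h: "\<And>i. i < m \<Longrightarrow> S < real (a i) * real m" unfolding S_def by force
  have "(\<Sum>i<m. S) < (\<Sum>i<m. real (a i) * real m)"
    using assms h by (intro sum_strict_mono) auto
  moreover have "(\<Sum>i<m. real (a i) * real m) = S * real m"
    by (simp add: S_def sum_distrib_right)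
  ultimately show False by simp
qed

lemma rot_card:
  assumes "j + B \<le> d"
  shows "card {ps \<in> permutations_of_set {0..<d}. Q (take B (drop j ps))}
       = card {ps \<in> permutations_of_set {0..<d}. Q (take B ps)}"
proof -
  define P where "P = permutations_of_set {0..<d}"
  define f :: "nat list \<Rightarrow> nat list" where "f = rotate j"
  have injf: "inj f" unfolding f_def rotate_def by (intro inj_fn inj_rotate1)
  have lenP: "length ps = d" if "ps \<in> P" for ps
    using that length_finite_permutations_of_set unfolding P_def by fastforce
  have fP: "f ` P \<subseteq> P" unfolding P_def f_def
    by (force simp: permutations_of_set_def)
  have fPe: "f ` P = P" using endo_inj_surj[OF _ fP] injf unfolding P_def
    by (simp add: inj_on_subset)
  have tk: "take B (f ps) = take B (drop j ps)" if "ps \<in> P" for ps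
  proof -
    have "j < length ps \<or> B = 0" using assms lenP[OF that] by auto
    then show ?thesis
    proof
      assume jl: "j < length ps"
      have "f ps = drop j ps @ take j ps" unfolding f_def using jl by (simp add: rotate_drop_take)
      moreover have "length (drop j ps) \<ge> B" using assms lenP[OF that] by simp
      ultimately show ?thesis by simp
    qed simp
  qed
  have eq: "{ps \<in> P. Q (take B (drop j ps))} = {ps \<in> P. Q (take B (f ps))}" using tk by auto
  have img: "f ` {ps \<in> P. Q (take B (f ps))} = {ps \<in> P. Q (take B ps)}"
  proof
    show "f ` {ps \<in> P. Q (take B (f ps))} \<subseteq> {ps \<in> P. Q (take B ps)}" using fP by auto
  next
    show "{ps \<in> P. Q (take B ps)} \<subseteq> f ` {ps \<in> P. Q (take B (f ps))}"
    proof
      fix y assume y: "y \<in> {ps \<in> P. Q (take B ps)}"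
      then obtain z where "z \<in> P" "y = f z" using fPe by (metis (no_types, lifting) imageE mem_Collect_eq)
      thus "y \<in> f ` {ps \<in> P. Q (take B (f ps))}" using y by auto
    qed
  qed
  have "card {ps \<in> P. Q (take B (drop j ps))} = card (f ` {ps \<in> P. Q (take B (f ps))})"
    unfolding eq by (rule card_image[symmetric]) (use injf inj_on_subset in blast)
  thus ?thesis using img unfolding P_def by simp
qed

lemma tail:
  fixes \<epsilon> t0 :: real and d B M :: nat
  assumes e0: "0 < \<epsilon>" and e1: "\<epsilon> < 1" and Bd: "B \<le> d" and d0: "d > 0"
    and M: "M = card ({0..<d} \<inter> D)" and t0: "t0 \<le> (1-\<epsilon>) * (real B * real M / real d)"
  shows "real (card {ps \<in> permutations_of_set {0..<d}. real (cnt D B ps) < t0})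
     \<le> fact d * exp (-(\<epsilon>^2/2) * (real B * real M / real d))"
proof -
  define P where "P = permutations_of_set {0..<d}"
  define q where "q = 1 - \<epsilon>"
  define \<mu> where "\<mu> = real B * real M / real d"
  define S where "S = {ps \<in> P. real (cnt D B ps) < t0}"
  have q0: "0 < q" "q < 1" using e0 e1 by (auto simp: q_def)
  have lq: "ln q < 0" using q0 by simp
  have mu0: "\<mu> \<ge> 0" by (simp add: \<mu>_def)
  have mg: "(\<Sum>ps\<in>P. q ^ cnt D B ps) \<le> fact d * exp (-\<epsilon> * \<mu>)"
  proof -
    have "(\<Sum>ps\<in>P. q ^ cnt D B ps) \<le> fact (card {0..<d}) *
        exp (-(1-q) * real B * real (card ({0..<d} \<inter> D)) / real (card {0..<d}))"
      unfolding P_def using q0 Bd by (intro mgf) auto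
    also have "\<dots> = fact d * exp (-\<epsilon> * \<mu>)" by (simp add: q_def \<mu>_def M)
    finally show ?thesis .
  qed
  have qpow: "q ^ n = exp (real n * ln q)" for n
    using q0 by (simp add: exp_of_nat_mult)
  have "real (card S) * exp (t0 * ln q) = (\<Sum>ps\<in>S. exp (t0 * ln q))" by simp
  also have "\<dots> \<le> (\<Sum>ps\<in>S. q ^ cnt D B ps)"
  proof (intro sum_mono)
    fix ps assume "ps \<in> S"
    hence "real (cnt D B ps) < t0" by (simp add: S_def)
    hence "t0 * ln q \<le> real (cnt D B ps) * ln q" using lq by (intro mult_right_mono_neg) auto
    thus "exp (t0 * ln q) \<le> q ^ cnt D B ps" unfolding qpow by simp
  qed
  also have "\<dots> \<le> (\<Sum>ps\<in>P. q ^ cnt D B ps)"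
    by (intro sum_mono2) (use q0 in \<open>auto simp: P_def S_def\<close>)
  also have "\<dots> \<le> fact d * exp (-\<epsilon> * \<mu>)" by (rule mg)
  finally have c1: "real (card S) * exp (t0 * ln q) \<le> fact d * exp (-\<epsilon> * \<mu>)" .
  hence c2: "real (card S) \<le> fact d * exp (-\<epsilon> * \<mu> - t0 * ln q)"
    by (simp add: exp_diff divide_simps mult.commute)
  have "t0 * (- ln q) \<le> ((1-\<epsilon>) * \<mu>) * (- ln q)"
    using t0 lq by (intro mult_right_mono) (auto simp: \<mu>_def)
  hence "-\<epsilon> * \<mu> - t0 * ln q \<le> -\<mu> * (\<epsilon> + (1-\<epsilon>) * ln (1-\<epsilon>))"
    by (simp add: q_def algebra_simps)
  also have "\<dots> \<le> -\<mu> * (\<epsilon>^2/2)"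
    using chern_ineq[of \<epsilon>] e0 e1 mu0 by (intro mult_left_mono_neg) auto
  finally have ex: "-\<epsilon> * \<mu> - t0 * ln q \<le> -\<mu> * (\<epsilon>^2/2)" .
  have "-\<mu> * (\<epsilon>^2/2) = -(\<epsilon>^2/2) * \<mu>" by simp
  with ex have "-\<epsilon> * \<mu> - t0 * ln q \<le> -(\<epsilon>^2/2) * \<mu>" by linarith
  hence "exp (-\<epsilon> * \<mu> - t0 * ln q) \<le> exp (-(\<epsilon>^2/2) * \<mu>)" by (simp only: exp_le_cancel_iff)
  hence c3: "fact d * exp (-\<epsilon> * \<mu> - t0 * ln q) \<le> fact d * exp (-(\<epsilon>^2/2) * \<mu>)"
    by (intro mult_left_mono) auto
  show ?thesis using order_trans[OF c2 c3] unfolding S_def P_def \<mu>_def .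
qed



theorem lemma4:
  fixes n d B :: nat and c r \<epsilon> :: real
  assumes "n \<ge> 2" and "c \<ge> 1" and "r \<ge> 1" and "real d \<ge> r" and "\<epsilon> > 0"
    and B_def: "real B = 2 * \<epsilon> powr (-2) * (real d / (c * r)) * ln (real n)"
    and B_dvd: "B dvd d"
  shows "\<exists>F :: (bool list \<Rightarrow> bool list) list pmf.
    (\<forall>Fs \<in> set_pmf F. length Fs = d div B \<and>
        (\<forall>f \<in> set Fs. \<forall>x. length x = d \<longrightarrow> length (f x) = B)) \<and>
    (\<forall>x y. length x = d \<longrightarrow> length y = d \<longrightarrow>
       measure_pmf.prob F {Fs. \<exists>f \<in> set Fs.
          real (hdist (f x) (f y)) \<le> real (hdist x y) * real B / real d} = 1) \<and>
    (\<forall>x y. length x = d \<longrightarrow> length y = d \<longrightarrow> real (hdist x y) \<ge> c * r \<longrightarrow>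
       (\<forall>i < d div B. measure_pmf.prob F {Fs.
          real (hdist ((Fs ! i) x) ((Fs ! i) y)) \<ge> (1 - \<epsilon>) * c * r * real B / real d}
        \<ge> 1 - 1 / real n))"
proof -
  define P where "P = permutations_of_set {0..<d}"
  define m where "m = d div B"
  define blk where "blk i ps = take B (drop (i*B) ps)" for i and ps :: "nat list"
  define mk where "mk ps = map (\<lambda>i. \<lambda>x::bool list. map (\<lambda>j. x ! j) (blk i ps)) [0..<m]" for ps
  define F where "F = map_pmf mk (pmf_of_set P)"
  have d0: "d > 0" using assms(3,4) by simp
  have n1: "real n > 1" using assms(1) by simp
  have lnpos: "ln (real n) > 0" using n1 by simp
  have cr: "c * r > 0" using assms(2,3) by simp
  have ep: "\<epsilon> powr (-2) = 1 / \<epsilon>^2" using assms(5) by (simp add: powr_minus powr_realpow divide_inverse)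
  have "real B > 0" unfolding B_def ep using assms(2,3,5) d0 lnpos cr by (intro mult_pos_pos divide_pos_pos) auto
  hence B0: "B > 0" by simp
  have Bd: "B \<le> d" using B_dvd d0 by (simp add: dvd_imp_le)
  have mB: "m * B = d" unfolding m_def using B_dvd by simp
  have m0: "m > 0" using mB d0 by (cases m) auto
  have realm: "real m = real d / real B" using mB B0 by (simp add: field_simps flip: of_nat_mult)
  have Pfin: "finite P" and Pne: "P \<noteq> {}" unfolding P_def by auto
  have cardP: "card P = fact d" unfolding P_def by simp
  have lenP: "length ps = d" if "ps \<in> P" for ps
    using that length_finite_permutations_of_set unfolding P_def by fastforce
  have lenblk: "length (blk i ps) = B" if "ps \<in> P" "i < m" for ps i
  proof -
    have "Suc i * B \<le> m * B" using that(2) by (intro mult_right_mono) auto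
    thus ?thesis using lenP[OF that(1)] mB by (simp add: blk_def)
  qed
  have setF: "set_pmf F = mk ` P" unfolding F_def using Pfin Pne by simp
  have probF: "measure_pmf.prob F S = real (card (P \<inter> mk -` S)) / real (card P)" for S
    unfolding F_def by (simp add: measure_pmf_of_set[OF Pne Pfin])
  have nthmk: "mk ps ! i = (\<lambda>x. map (\<lambda>j. x ! j) (blk i ps))" if "i < m" for ps i
    using that by (simp add: mk_def)
  show ?thesis
  proof (intro exI[of _ F] conjI allI impI ballI)
    fix Fs assume "Fs \<in> set_pmf F"
    then obtain ps where ps: "ps \<in> P" "Fs = mk ps" using setF by auto
    show "length Fs = d div B" using ps by (simp add: mk_def m_def)
    fix f x assume f: "f \<in> set Fs" and x: "length (x :: bool list) = d"
    then obtain i where "i < m" "f = (\<lambda>x. map (\<lambda>j. x ! j) (blk i ps))" using ps by (auto simp: mk_def)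
    thus "length (f x) = B" using lenblk[OF ps(1)] by simp
  next
    fix x y :: "bool list" assume x: "length x = d" and y: "length y = d"
    let ?S = "{Fs. \<exists>f \<in> set Fs. real (hdist (f x) (f y)) \<le> real (hdist x y) * real B / real d}"
    have "P \<inter> mk -` ?S = P"
    proof (intro equalityI subsetI IntI)
      fix ps assume ps: "ps \<in> P"
      define a where "a i = hdist (map (nth x) (blk i ps)) (map (nth y) (blk i ps))" for i
      have suma: "(\<Sum>i<m. a i) = hdist x y"
      proof -
        have "(\<Sum>i<m. a i) = length (filter (\<lambda>j. x!j \<noteq> y!j) (take (m*B) ps))"
          unfolding a_def hdist_map blk_def by (rule block_sum)
        also have "take (m*B) ps = ps" using mB lenP[OF ps] by simp
        finally show ?thesis using hdist_perm[of ps d x y] ps x y by (simp add: P_def)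
      qed
      obtain i where i: "i < m" "real (a i) * real m \<le> real (\<Sum>i<m. a i)"
        using averaging[OF m0] by blast
      have "real (a i) \<le> real (hdist x y) * real B / real d"
        using i(2) suma B0 d0 unfolding realm by (simp add: field_simps)
      moreover have "mk ps ! i \<in> set (mk ps)" using i(1) by (simp add: mk_def)
      ultimately show "ps \<in> mk -` ?S" using nthmk[OF i(1)] by (auto simp: a_def intro!: bexI[of _ "mk ps ! i"])
    qed auto
    thus "measure_pmf.prob F ?S = 1" using probF Pfin Pne by (simp add: card_gt_0_iff)
  next
    fix x y :: "bool list" and i assume x: "length x = d" and y: "length y = d"
      and far: "real (hdist x y) \<ge> c * r" and i: "i < d div B"
    hence im: "i < m" by (simp add: m_def)
    let ?T = "(1 - \<epsilon>) * c * r * real B / real d"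
    let ?S = "{Fs. real (hdist ((Fs ! i) x) ((Fs ! i) y)) \<ge> ?T}"
    define D where "D = {j. x ! j \<noteq> y ! j}"
    define M where "M = card ({0..<d} \<inter> D)"
    have MH: "M = hdist x y" unfolding M_def D_def hdist_def using x y
      by (intro arg_cong[where f=card]) auto
    have hd_eq: "hdist ((mk ps ! i) x) ((mk ps ! i) y) = length (filter (\<lambda>j. j \<in> D) (take B (drop (i*B) ps)))" for ps
      unfolding nthmk[OF im] hdist_map blk_def D_def by simp
    show "measure_pmf.prob F ?S \<ge> 1 - 1 / real n"
    proof (cases "\<epsilon> \<ge> 1")
      case True
      have "(1 - \<epsilon>) * (c * r * real B) \<le> 0" using True cr by (intro mult_nonpos_nonneg) auto
      hence "?T \<le> 0" using d0 by (simp add: divide_nonpos_pos mult.assoc)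
      hence "P \<inter> mk -` ?S = P" by (auto intro: order_trans)
      hence "measure_pmf.prob F ?S = 1" using probF Pfin Pne by (simp add: card_gt_0_iff)
      thus ?thesis using n1 by simp
    next
      case False
      define Bad where "Bad = {ps \<in> P. real (length (filter (\<lambda>j. j \<in> D) (take B (drop (i*B) ps)))) < ?T}"
      have split: "card (P \<inter> mk -` ?S) + card Bad = card P"
      proof -
        have "P \<inter> mk -` ?S = P - Bad" unfolding Bad_def using hd_eq by auto
        moreover have "Bad \<subseteq> P" by (auto simp: Bad_def)
        ultimately show ?thesis using Pfin by (metis card_Diff_subset card_mono le_add_diff_inverse2 finite_subset)
      qed
      have iB: "i*B + B \<le> d"
      proof -
        have "Suc i * B \<le> m * B" using im by (intro mult_right_mono) auto
        thus ?thesis using mB by simp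
      qed
      have "card Bad = card {ps \<in> P. real (cnt D B ps) < ?T}"
        unfolding Bad_def P_def cnt_def by (rule rot_card[OF iB])
      also have "real \<dots> \<le> fact d * exp (-(\<epsilon>^2/2) * (real B * real M / real d))"
        unfolding P_def
      proof (rule tail)
        show "?T \<le> (1 - \<epsilon>) * (real B * real M / real d)"
        proof -
          have "c * r * real B / real d \<le> real M * real B / real d"
            using far MH d0 by (intro divide_right_mono mult_right_mono) auto
          hence "(1 - \<epsilon>) * (c * r * real B / real d) \<le> (1 - \<epsilon>) * (real M * real B / real d)"
            using False by (intro mult_left_mono) auto
          thus ?thesis by (simp add: mult_ac)
        qed
      qed (use assms(5) False Bd d0 M_def in auto)
      also have "exp (-(\<epsilon>^2/2) * (real B * real M / real d)) \<le> exp (-(\<epsilon>^2/2) * (real B * (c * r) / real d))"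
        using far MH d0 by (auto intro!: divide_right_mono mult_left_mono)
      also have "-(\<epsilon>^2/2) * (real B * (c * r) / real d) = - ln (real n)"
        unfolding B_def ep using assms(2,3,5) cr d0 by (simp add: field_simps)
      also have "exp (- ln (real n)) = 1 / real n" using n1 by (simp add: exp_minus inverse_eq_divide)
      finally have bad: "real (card Bad) \<le> fact d * (1 / real n)" by simp
      have "measure_pmf.prob F ?S = real (card (P \<inter> mk -` ?S)) / real (card P)" by (rule probF)
      also have "\<dots> = 1 - real (card Bad) / fact d"
        using split cardP by (simp add: field_simps flip: of_nat_add)
      also have "\<dots> \<ge> 1 - 1 / real n"
      proof -
        have "real (card Bad) / fact d \<le> 1 / real n"
          using bad by (subst pos_divide_le_eq) (auto simp: mult.commute)
        thus ?thesis by linarith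
      qed
      finally show ?thesis .
    qed
  qed
qed

end
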